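(* Let $q>0$, $q\ne1$, $\nu\ne0$ real. Let $\phi:(\mathbb{R}\setminus\{0\})\times\mathbb{R}\to\mathbb{R}$ be differentiable in $t$, nowhere zero, and satisfy the $q$-heat equation $\partial_t\phi(x,t)=\nu D_x^2\phi(x,t)$. Define $u(x,t)=-2\nu\,\frac{D_x\phi(x,t)}{\phi(x,t)}$. Then for all $x\ne0$ and $t$, $$\partial_tu(x,t)-\nu D_x^2u(x,t)=\tfrac12\,u(x,t)\big[(1-M_q^x)D_xu\big](x,t)-\tfrac12 D_x\big(u(qx,t)u(x,t)\big)+\frac{1}{4\nu}\big[u(q^2x,t)-u(x,t)\big]u(qx,t)u(x,t).$$
   Context: $D_x$ is the $q$-derivative in $x$ at fixed $t$: $D_xf(x,t)=\frac{f(qx,t)-f(x,t)}{(q-1)x}$, $D_x^2=D_x\circ D_x$; $\partial_t$ is the ordinary time derivative. $M_q^x$ is the dilation operator $(M_q^xf)(x,t)=f(qx,t)$, so $[(1-M_q^x)D_xu](x,t)=(D_xu)(x,t)-(D_xu)(qx,t)$. *)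

theory Defs
  imports Complex_Main
begin

definition qD :: "real \<Rightarrow> (real \<Rightarrow> real) \<Rightarrow> real \<Rightarrow> real" where
  "qD q f x = (f (q * x) - f x) / ((q - 1) * x)"

end

theory Submission
  imports Defs
begin

lemma alg:
  fixes q \<nu> c a0 a1 a2 a3 :: real
  assumes "q \<noteq> 0" "\<nu> \<noteq> 0" "c \<noteq> 0" "a0 \<noteq> 0" "a1 \<noteq> 0" "a2 \<noteq> 0" "a3 \<noteq> 0"
  defines "U0 \<equiv> -2*\<nu>*((a1-a0)/c)/a0"
      and "U1 \<equiv> -2*\<nu>*((a2-a1)/(q*c))/a1"
      and "U2 \<equiv> -2*\<nu>*((a3-a2)/(q*(q*c)))/a2"
      and "H0 \<equiv> \<nu>*(((a2-a1)/(q*c) - (a1-a0)/c)/c)"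
      and "H1 \<equiv> \<nu>*(((a3-a2)/(q*(q*c)) - (a2-a1)/(q*c))/(q*c))"
  shows "-2*\<nu>*(((H1 - H0)/c) * a0 - (a1-a0)/c * H0)/(a0*a0)
    = \<nu> * (((U2-U1)/(q*c) - (U1-U0)/c)/c)
      + 1/2 * U0 * ((U1-U0)/c - (U2-U1)/(q*c))
      - 1/2 * ((U2*U1 - U1*U0)/c)
      + 1/(4*\<nu>) * (U2 - U0) * U1 * U0"
  using assms unfolding U0_def U1_def U2_def H0_def H1_def
  by (simp add: field_simps)

theorem mainTheorem12:
  fixes q \<nu> :: real and \<phi> u :: "real \<Rightarrow> real \<Rightarrow> real"
  assumes q_pos: "q > 0" and q_ne: "q \<noteq> 1" and nu_ne: "\<nu> \<noteq> 0"
    and phi_diff: "\<And>x t. x \<noteq> 0 \<Longrightarrow> (\<lambda>s. \<phi> x s) differentiable (at t)"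
    and phi_nz: "\<And>x t. x \<noteq> 0 \<Longrightarrow> \<phi> x t \<noteq> 0"
    and heat: "\<And>x t. x \<noteq> 0 \<Longrightarrow>
        ((\<lambda>s. \<phi> x s) has_real_derivative \<nu> * qD q (qD q (\<lambda>y. \<phi> y t)) x) (at t)"
    and u_def: "\<And>x t. u x t = - 2 * \<nu> * qD q (\<lambda>y. \<phi> y t) x / \<phi> x t"
    and x_ne: "x \<noteq> 0"
  shows "((\<lambda>s. u x s) has_real_derivative
           (\<nu> * qD q (qD q (\<lambda>y. u y t)) x
            + 1/2 * u x t * (qD q (\<lambda>y. u y t) x - qD q (\<lambda>y. u y t) (q * x))
            - 1/2 * qD q (\<lambda>y. u (q * y) t * u y t) x
            + 1 / (4 * \<nu>) * (u (q^2 * x) t - u x t) * u (q * x) t * u x t)) (at t)"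
proof -
  have qx: "q * x \<noteq> 0" "q * (q * x) \<noteq> 0" "q * (q * (q * x)) \<noteq> 0" using q_pos x_ne by auto
  have c: "(q - 1) * x \<noteq> 0" using q_ne x_ne by auto
  define c where "c = (q - 1) * x"
  have cq: "(q - 1) * (q * x) = q * c" "(q - 1) * (q * (q * x)) = q * (q * c)"
    "(q - 1) * (q * (q * (q * x))) = q * (q * (q * c))" unfolding c_def by (simp_all add: algebra_simps)
  define a0 where "a0 = \<phi> x t"
  define a1 where "a1 = \<phi> (q*x) t"
  define a2 where "a2 = \<phi> (q*(q*x)) t"
  define a3 where "a3 = \<phi> (q*(q*(q*x))) t"
  define H0 where "H0 = \<nu>*(((a2-a1)/(q*c) - (a1-a0)/c)/c)"
  define H1 where "H1 = \<nu>*(((a3-a2)/(q*(q*c)) - (a2-a1)/(q*c))/(q*c))"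
  have d0: "((\<lambda>s. \<phi> x s) has_real_derivative H0) (at t)"
    using heat[OF x_ne, of t] unfolding H0_def a0_def a1_def a2_def qD_def c_def cq by simp
  have d1: "((\<lambda>s. \<phi> (q*x) s) has_real_derivative H1) (at t)"
    using heat[OF qx(1), of t] unfolding H1_def a3_def a1_def a2_def qD_def cq by (simp add: mult.assoc)
  have ueq: "(\<lambda>s. u x s) = (\<lambda>s. -2*\<nu>*((\<phi> (q*x) s - \<phi> x s)/c)/\<phi> x s)"
    by (simp add: u_def qD_def c_def)
  have D: "((\<lambda>s. u x s) has_real_derivative
     -2*\<nu>*(((H1 - H0)/c) * a0 - (a1-a0)/c * H0)/(a0*a0)) (at t)"
  proof -
    have n: "-2*\<nu>*(((H1 - H0)/c) * a0 - (a1-a0)/c * H0)/(a0*a0)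
       = ((-2*\<nu>) * ((H1 - H0)/c) * \<phi> x t - (-2*\<nu>) * ((\<phi> (q*x) t - \<phi> x t)/c) * H0) / (\<phi> x t * \<phi> x t)"
      unfolding a0_def a1_def by (simp add: algebra_simps diff_divide_distrib)
    have g: "((\<lambda>s. (\<phi> (q*x) s - \<phi> x s)/c) has_real_derivative (H1-H0)/c) (at t)"
      using DERIV_cdivide[OF DERIV_diff[OF d1 d0], of c] by simp
    have g2: "((\<lambda>s. -2*\<nu>*((\<phi> (q*x) s - \<phi> x s)/c)) has_real_derivative (-2*\<nu>)*((H1-H0)/c)) (at t)"
      using DERIV_cmult[OF g, of "-2*\<nu>"] by simp
    show ?thesis unfolding ueq n
      using DERIV_divide[OF g2 d0 phi_nz[OF x_ne, of t]] by simp
  qed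
  have E: "-2*\<nu>*(((H1 - H0)/c) * a0 - (a1-a0)/c * H0)/(a0*a0) =
           (\<nu> * qD q (qD q (\<lambda>y. u y t)) x
            + 1/2 * u x t * (qD q (\<lambda>y. u y t) x - qD q (\<lambda>y. u y t) (q * x))
            - 1/2 * qD q (\<lambda>y. u (q * y) t * u y t) x
            + 1 / (4 * \<nu>) * (u (q^2 * x) t - u x t) * u (q * x) t * u x t)"
  proof -
    have q2: "q^2 * x = q * (q * x)" by (simp add: power2_eq_square)
    show ?thesis
      unfolding q2 qD_def u_def cq c_def[symmetric] H0_def H1_def
      unfolding a0_def[symmetric] a1_def[symmetric] a2_def[symmetric] a3_def[symmetric]
      apply (rule alg)
      using q_pos nu_ne c phi_nz x_ne qx unfolding c_def a0_def a1_def a2_def a3_def by auto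
  qed
  show ?thesis using D E by simp
qed

end
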